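(* For every ${\bf F}(z)=\sum_{c=1}^sF_c(z)\otimes e_c\in\hat\Lambda^{(s)}\otimes V$ and every $N\in{\mathbb N}$, $$E_N\big((\bar\pi_{N-1}\otimes1){\bf F}(z)\big)=\bar\pi_N\big(\mathcal S({\bf F}(z))\big)$$ as elements of $\Lambda^{s,N}_+$.
   Context: Fix $s\ge1$. Let $\hat\Lambda^{(s)}={\mathbb C}[p_{a,k}: a=1,\dots,s,\ k=0,1,2,\dots]$, $e_1,\dots,e_s$ the standard basis of ${\mathbb C}^s$, $V={\mathbb C}[z]\otimes{\mathbb C}^s$. For $c=1,\dots,s$, $\Phi_c(z)$ is the substitution $p_{c,k}\mapsto p_{c,k}+z^k$ ($k\ge0$) and $\Phi_c^{-1}(z)$ the substitution $p_{c,k}\mapsto p_{c,k}-z^k$ ($k\ge0$), other variables unchanged; $\varphi^-_c(z)=\sum_{k\ge0}p_{c,k}z^{-k}$ (multiplication operator). $\langle0|_+$ is the constant-term functional on $\hat\Lambda^{(s)}$. Define $\bar\pi_N(|v\rangle_+)=\sum_{c_1,\dots,c_N}\langle0|_+\Phi_{c_N}(x_N)\cdots\Phi_{c_1}(x_1)|v\rangle_+\,e_{c_1}\otimes\cdots\otimes e_{c_N}\in{\mathbb C}[x_1,\dots,x_N]\otimes({\mathbb C}^s)^{\otimes N}$ (the $i$-th factor carries $x_i$). $\Lambda^{s,N}_+$ is the space of such tensors invariant under all $\sigma_{ij}=K_{ij}P_{ij}$ ($K_{ij}$ swaps $x_i,x_j$; $P_{ij}$ swaps tensor factors $i,j$).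 $(\bar\pi_{N-1}\otimes1){\bf F}(z)$ denotes $\sum_{c_1,\dots,c_N}\langle0|_+\Phi_{c_N}(x_N)\cdots\Phi_{c_2}(x_2)F_{c_1}(x_1)\,e_{c_1}\otimes\cdots\otimes e_{c_N}$, which is invariant under $\sigma_{ij}$ for $i,j\ge2$. For such a tensor $u$, $E_N(u)=\sum_{j=1}^N\sigma_{1j}(u)$ with $\sigma_{11}=\mathrm{id}$. Finally $\mathcal S({\bf F}(z))\in\hat\Lambda^{(s)}$ is the coefficient of $z^0$ of the Laurent series $\sum_{c=1}^s\varphi^-_c(z)\,\Phi_c^{-1}(z)F_c(z)$ (here $\Phi_c^{-1}(z)$ acts on the $\hat\Lambda^{(s)}$-coefficients of $F_c(z)$). *)

theory Defs
  imports Complex_Main "HOL-Library.Poly_Mapping"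
begin

text \<open>Variables: P a k stands for p_{a,k}; Z for the formal variable z; X i for x_i.\<close>
datatype var = P nat nat | Z | X nat

type_synonym pol = "(var \<Rightarrow>\<^sub>0 nat) \<Rightarrow>\<^sub>0 complex"

definition cst :: "complex \<Rightarrow> pol" where
  "cst a = Poly_Mapping.single 0 a"

definition Var :: "var \<Rightarrow> pol" where
  "Var v = Poly_Mapping.single (Poly_Mapping.single v 1) 1"

definition subst :: "(var \<Rightarrow> pol) \<Rightarrow> pol \<Rightarrow> pol" where
  "subst \<sigma> f = (\<Sum>m\<in>Poly_Mapping.keys f.
     cst (Poly_Mapping.lookup f m) *
     (\<Prod>v\<in>Poly_Mapping.keys (m :: var \<Rightarrow>\<^sub>0 nat). \<sigma> v ^ Poly_Mapping.lookup m v))"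

definition vars :: "pol \<Rightarrow> var set" where
  "vars f = (\<Union>m\<in>Poly_Mapping.keys f. Poly_Mapping.keys m)"

definition Phi :: "nat \<Rightarrow> pol \<Rightarrow> pol \<Rightarrow> pol" where
  "Phi c w = subst (\<lambda>v. case v of
      P a k \<Rightarrow> (if a = c then Var (P a k) + w ^ k else Var (P a k))
    | _ \<Rightarrow> Var v)"

definition Phi_inv :: "nat \<Rightarrow> pol \<Rightarrow> pol \<Rightarrow> pol" where
  "Phi_inv c w = subst (\<lambda>v. case v of
      P a k \<Rightarrow> (if a = c then Var (P a k) - w ^ k else Var (P a k))
    | _ \<Rightarrow> Var v)"

text \<open>The constant-term functional <0|_+ in the p-variables (extended linearly over the
  remaining variables).\<close>
definition vac :: "pol \<Rightarrow> pol" where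
  "vac = subst (\<lambda>v. case v of P a k \<Rightarrow> 0 | _ \<Rightarrow> Var v)"

text \<open>Tensors in C[x_1..x_N] (x) (C^s)^{(x)N} are represented by their coefficient
  functions: c (with c i in {1..s} for i = 1..N) gives the coefficient of
  e_{c 1} (x) ... (x) e_{c N}.\<close>

definition pibar :: "nat \<Rightarrow> pol \<Rightarrow> (nat \<Rightarrow> nat) \<Rightarrow> pol" where
  "pibar N v c = vac (fold (\<lambda>i. Phi (c i) (Var (X i))) [1..<Suc N] v)"

text \<open>(pibar_{N-1} (x) 1) F(z): coefficient at c is
  <0| Phi_{c_N}(x_N) ... Phi_{c_2}(x_2) F_{c_1}(x_1).\<close>
definition pibar_F :: "nat \<Rightarrow> (nat \<Rightarrow> pol) \<Rightarrow> (nat \<Rightarrow> nat) \<Rightarrow> pol" where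
  "pibar_F N F c = vac (fold (\<lambda>i. Phi (c i) (Var (X i))) [2..<Suc N]
       (subst (\<lambda>v. if v = Z then Var (X 1) else Var v) (F (c 1))))"

definition swapX :: "nat \<Rightarrow> nat \<Rightarrow> pol \<Rightarrow> pol" where
  "swapX i j = subst (\<lambda>v. case v of
      X k \<Rightarrow> Var (X (if k = i then j else if k = j then i else k))
    | _ \<Rightarrow> Var v)"

text \<open>sigma_{ij} = K_{ij} P_{ij} acting on coefficient functions.\<close>
definition sigma :: "nat \<Rightarrow> nat \<Rightarrow> ((nat \<Rightarrow> nat) \<Rightarrow> pol) \<Rightarrow> (nat \<Rightarrow> nat) \<Rightarrow> pol" where
  "sigma i j u c = swapX i j (u (c(i := c j, j := c i)))"

definition EN :: "nat \<Rightarrow> ((nat \<Rightarrow> nat) \<Rightarrow> pol) \<Rightarrow> (nat \<Rightarrow> nat) \<Rightarrow> pol" where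
  "EN N u c = (\<Sum>j=1..N. sigma 1 j u c)"

definition coeffZ :: "nat \<Rightarrow> pol \<Rightarrow> pol" where
  "coeffZ k g = (\<Sum>m\<in>{m\<in>Poly_Mapping.keys g. Poly_Mapping.lookup m Z = k}.
       Poly_Mapping.single (m - Poly_Mapping.single Z k) (Poly_Mapping.lookup g m))"

text \<open>S(F): coefficient of z^0 in sum_c phi^-_c(z) Phi_c^{-1}(z) F_c(z), where
  phi^-_c(z) = sum_k p_{c,k} z^{-k}; for G polynomial in z this coefficient is
  sum_k p_{c,k} [z^k] G (a finite sum over the z-degrees occurring in G).\<close>
definition S :: "nat \<Rightarrow> (nat \<Rightarrow> pol) \<Rightarrow> pol" where
  "S s F = (\<Sum>c=1..s. let G = Phi_inv c (Var Z) (F c) in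
       (\<Sum>k\<in>(\<lambda>m. Poly_Mapping.lookup m Z) ` Poly_Mapping.keys G. Var (P c k) * coeffZ k G))"

end

theory Submission
  imports Defs
begin
lemma pm_expand: "f = (\<Sum>m\<in>Poly_Mapping.keys f. Poly_Mapping.single m (Poly_Mapping.lookup f m))"
  by (rule poly_mapping_eqI)
     (auto simp: lookup_sum lookup_single when_def in_keys_iff)

definition mono :: "(var \<Rightarrow> pol) \<Rightarrow> (var \<Rightarrow>\<^sub>0 nat) \<Rightarrow> pol" where
  "mono \<sigma> m = (\<Prod>v\<in>Poly_Mapping.keys m. \<sigma> v ^ Poly_Mapping.lookup m v)"

lemma mono_sup: "finite A \<Longrightarrow> Poly_Mapping.keys m \<subseteq> A \<Longrightarrow>
   mono \<sigma> m = (\<Prod>v\<in>A. \<sigma> v ^ Poly_Mapping.lookup m v)"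
  unfolding mono_def by (rule prod.mono_neutral_left) (auto simp: in_keys_iff)

lemma mono_add: "mono \<sigma> (m + n) = mono \<sigma> m * mono \<sigma> n"
proof -
  let ?A = "Poly_Mapping.keys m \<union> Poly_Mapping.keys n"
  have "mono \<sigma> (m+n) = (\<Prod>v\<in>?A. \<sigma> v ^ Poly_Mapping.lookup (m+n) v)"
    by (rule mono_sup) (auto dest: keys_add[THEN subsetD])
  also have "\<dots> = (\<Prod>v\<in>?A. \<sigma> v ^ Poly_Mapping.lookup m v) * (\<Prod>v\<in>?A. \<sigma> v ^ Poly_Mapping.lookup n v)"
    by (simp add: lookup_add power_add prod.distrib)
  also have "\<dots> = mono \<sigma> m * mono \<sigma> n"
    using mono_sup[of ?A m \<sigma>] mono_sup[of ?A n \<sigma>] by simp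
  finally show ?thesis .
qed

lemma mono_zero[simp]: "mono \<sigma> 0 = 1" by (simp add: mono_def)

lemma cst_add: "cst (a + b) = cst a + cst b" by (simp add: cst_def single_add)
lemma cst_mult: "cst (a * b) = cst a * cst b" by (simp add: cst_def mult_single)
lemma cst_0[simp]: "cst 0 = 0" by (simp add: cst_def)
lemma cst_1[simp]: "cst 1 = 1" by (simp add: cst_def)

lemma subst_mono_def: "subst \<sigma> f = (\<Sum>m\<in>Poly_Mapping.keys f. cst (Poly_Mapping.lookup f m) * mono \<sigma> m)"
  by (simp add: subst_def mono_def)

lemma subst_sup: "finite A \<Longrightarrow> Poly_Mapping.keys f \<subseteq> A \<Longrightarrow>
   subst \<sigma> f = (\<Sum>m\<in>A. cst (Poly_Mapping.lookup f m) * mono \<sigma> m)"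
  unfolding subst_mono_def by (rule sum.mono_neutral_left) (auto simp: in_keys_iff)

lemma subst_add: "subst \<sigma> (f + g) = subst \<sigma> f + subst \<sigma> g"
proof -
  let ?A = "Poly_Mapping.keys f \<union> Poly_Mapping.keys g"
  have "subst \<sigma> (f+g) = (\<Sum>m\<in>?A. cst (Poly_Mapping.lookup (f+g) m) * mono \<sigma> m)"
    by (rule subst_sup) (auto dest: keys_add[THEN subsetD])
  also have "\<dots> = (\<Sum>m\<in>?A. cst (Poly_Mapping.lookup f m) * mono \<sigma> m) + (\<Sum>m\<in>?A. cst (Poly_Mapping.lookup g m) * mono \<sigma> m)"
    by (simp add: lookup_add cst_add distrib_right sum.distrib)
  also have "\<dots> = subst \<sigma> f + subst \<sigma> g"
    using subst_sup[of ?A f \<sigma>] subst_sup[of ?A g \<sigma>] by simp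
  finally show ?thesis .
qed

lemma subst_0[simp]: "subst \<sigma> 0 = 0" by (simp add: subst_def)

lemma subst_sum: "subst \<sigma> (sum g A) = (\<Sum>a\<in>A. subst \<sigma> (g a))"
  by (induction A rule: infinite_finite_induct) (auto simp: subst_add)

lemma subst_single: "subst \<sigma> (Poly_Mapping.single m a) = cst a * mono \<sigma> m"
  by (subst subst_sup[where A="{m}"]) auto

lemma subst_mult: "subst \<sigma> (f * g) = subst \<sigma> f * subst \<sigma> g"
proof -
  have "f * g = (\<Sum>m\<in>Poly_Mapping.keys f. Poly_Mapping.single m (Poly_Mapping.lookup f m)) *
     (\<Sum>n\<in>Poly_Mapping.keys g. Poly_Mapping.single n (Poly_Mapping.lookup g n))"
    by (subst pm_expand[of f], subst pm_expand[of g]) (rule refl)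
  also have "\<dots> = (\<Sum>m\<in>Poly_Mapping.keys f. \<Sum>n\<in>Poly_Mapping.keys g.
      Poly_Mapping.single (m+n) (Poly_Mapping.lookup f m * Poly_Mapping.lookup g n))"
    by (simp add: sum_product mult_single)
  finally have "subst \<sigma> (f*g) = (\<Sum>m\<in>Poly_Mapping.keys f. \<Sum>n\<in>Poly_Mapping.keys g.
      cst (Poly_Mapping.lookup f m) * mono \<sigma> m * (cst (Poly_Mapping.lookup g n) * mono \<sigma> n))"
    by (simp add: subst_sum subst_single cst_mult mono_add mult_ac)
  also have "\<dots> = subst \<sigma> f * subst \<sigma> g"
    by (simp add: subst_mono_def sum_product)
  finally show ?thesis .
qed

lemma subst_cst[simp]: "subst \<sigma> (cst a) = cst a"
  unfolding cst_def subst_single by (simp add: cst_def mono_def)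

lemma subst_1[simp]: "subst \<sigma> 1 = 1"
  using subst_cst[of \<sigma> 1] by simp

lemma subst_Var[simp]: "subst \<sigma> (Var v) = \<sigma> v"
  unfolding Var_def subst_single by (simp add: mono_def)

lemma subst_pow: "subst \<sigma> (f ^ n) = subst \<sigma> f ^ n"
  by (induction n) (auto simp: subst_mult)

lemma subst_prod: "subst \<sigma> (prod g A) = (\<Prod>a\<in>A. subst \<sigma> (g a))"
  by (induction A rule: infinite_finite_induct) (auto simp: subst_mult)

lemma subst_diff: "subst \<sigma> (f - g) = subst \<sigma> f - subst \<sigma> g"
  using subst_add[of \<sigma> "f - g" g] by simp

lemma subst_subst: "subst \<sigma> (subst \<tau> f) = subst (\<lambda>v. subst \<sigma> (\<tau> v)) f"
proof -
  have "subst \<sigma> (subst \<tau> f) = (\<Sum>m\<in>Poly_Mapping.keys f.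
     cst (Poly_Mapping.lookup f m) * (\<Prod>v\<in>Poly_Mapping.keys m. subst \<sigma> (\<tau> v) ^ Poly_Mapping.lookup m v))"
    by (simp only: subst_def[of \<tau> f] subst_sum subst_mult subst_prod subst_pow subst_cst)
  then show ?thesis by (simp only: subst_def[of "\<lambda>v. subst \<sigma> (\<tau> v)" f])
qed

lemma subst_cong: "(\<And>v. v \<in> vars f \<Longrightarrow> \<sigma> v = \<tau> v) \<Longrightarrow> subst \<sigma> f = subst \<tau> f"
  unfolding subst_def vars_def by (intro sum.cong refl arg_cong2[where f="(*)"] prod.cong) (auto; metis)

lemma Var_pow: "Var v ^ n = Poly_Mapping.single (Poly_Mapping.single v n) 1"
  by (induction n) (auto simp: Var_def mult_single simp flip: single_add)

lemma prod_single: "(\<Prod>v\<in>A. Poly_Mapping.single (g v) (1::complex)) = Poly_Mapping.single (\<Sum>v\<in>A. g v) 1"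
  by (induction A rule: infinite_finite_induct) (auto simp: mult_single)

lemma mono_Var: "mono Var m = Poly_Mapping.single m 1"
proof -
  have "mono Var m = Poly_Mapping.single (\<Sum>v\<in>Poly_Mapping.keys m. Poly_Mapping.single v (Poly_Mapping.lookup m v)) 1"
    by (simp add: mono_def Var_pow prod_single)
  also have "\<dots> = Poly_Mapping.single m 1" by (subst (2) pm_expand[of m]) (rule refl)
  finally show ?thesis .
qed

lemma subst_Var_id: "subst Var f = f"
proof -
  have "subst Var f = (\<Sum>m\<in>Poly_Mapping.keys f. Poly_Mapping.single m (Poly_Mapping.lookup f m))"
    by (simp add: subst_mono_def mono_Var cst_def mult_single)
  also have "\<dots> = f" by (rule pm_expand[symmetric])
  finally show ?thesis .
qed

lemma vars_add: "vars (f + g) \<subseteq> vars f \<union> vars g"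
  unfolding vars_def using keys_add[of f g] by blast

lemma vars_sum: "vars (sum g A) \<subseteq> (\<Union>a\<in>A. vars (g a))"
  unfolding vars_def using keys_sum[of g A] by blast

lemma vars_single: "vars (Poly_Mapping.single m a) \<subseteq> Poly_Mapping.keys m"
  unfolding vars_def by auto

lemma Z_notin_coeffZ: "Z \<notin> vars (coeffZ k g)"
proof
  assume "Z \<in> vars (coeffZ k g)"
  then obtain m where m: "m \<in> Poly_Mapping.keys g" "Poly_Mapping.lookup m Z = k"
     "Z \<in> vars (Poly_Mapping.single (m - Poly_Mapping.single Z k) (Poly_Mapping.lookup g m))"
    unfolding coeffZ_def using vars_sum by blast
  then have "Z \<in> Poly_Mapping.keys (m - Poly_Mapping.single Z k)" using vars_single by blast
  then show False using m(2) by (simp add: in_keys_iff lookup_minus)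
qed

lemma coeffZ_decomp: "g = (\<Sum>k\<in>(\<lambda>m. Poly_Mapping.lookup m Z) ` Poly_Mapping.keys g. Var Z ^ k * coeffZ k g)"
proof -
  have eq: "Poly_Mapping.single Z k + (m - Poly_Mapping.single Z k) = m" if "Poly_Mapping.lookup m Z = k" for m k
    by (rule poly_mapping_eqI) (use that in \<open>auto simp: lookup_add lookup_minus lookup_single when_def\<close>)
  have "(\<Sum>k\<in>(\<lambda>m. Poly_Mapping.lookup m Z) ` Poly_Mapping.keys g. Var Z ^ k * coeffZ k g)
     = (\<Sum>k\<in>(\<lambda>m. Poly_Mapping.lookup m Z) ` Poly_Mapping.keys g.
          \<Sum>m\<in>{m\<in>Poly_Mapping.keys g. Poly_Mapping.lookup m Z = k}. Poly_Mapping.single m (Poly_Mapping.lookup g m))"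
    unfolding coeffZ_def Var_pow sum_distrib_left
    by (intro sum.cong refl) (auto simp: mult_single eq)
  also have "\<dots> = (\<Sum>m\<in>Poly_Mapping.keys g. Poly_Mapping.single m (Poly_Mapping.lookup g m))"
    by (rule sum.image_gen[symmetric]) simp
  also have "\<dots> = g" by (rule pm_expand[symmetric])
  finally show ?thesis by simp
qed

lemma subst_if: "subst \<sigma> (if b then x else y) = (if b then subst \<sigma> x else subst \<sigma> y)"
  by simp

lemma subst_sumX: "subst \<sigma> (\<Sum>i\<in>A. if c i = a then Var (X i) ^ k else 0) = (\<Sum>i\<in>A. if c i = a then \<sigma> (X i) ^ k else 0)"
  unfolding subst_sum by (intro sum.cong refl) (simp add: subst_pow)

lemma subst_sumX_id: "(\<And>i. \<sigma> (X i) = Var (X i)) \<Longrightarrow> subst \<sigma> (\<Sum>i\<in>A. if c i = a then Var (X i) ^ k else 0) = (\<Sum>i\<in>A. if c i = a then Var (X i) ^ k else 0)"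
  unfolding subst_sumX by (simp cong: if_cong)

definition addP :: "(nat \<Rightarrow> nat) \<Rightarrow> nat set \<Rightarrow> var \<Rightarrow> pol" where
  "addP c A v = (case v of P a k \<Rightarrow> Var (P a k) + (\<Sum>i\<in>A. if c i = a then Var (X i) ^ k else 0) | _ \<Rightarrow> Var v)"

definition evs :: "(nat \<Rightarrow> nat) \<Rightarrow> nat set \<Rightarrow> var \<Rightarrow> pol" where
  "evs c A v = (case v of P a k \<Rightarrow> (\<Sum>i\<in>A. if c i = a then Var (X i) ^ k else 0) | _ \<Rightarrow> Var v)"

lemma fold_Phi: "distinct xs \<Longrightarrow>
  fold (\<lambda>i. Phi (c i) (Var (X i))) xs f = subst (addP c (set xs)) f"
proof (induction xs arbitrary: f)
  case Nil
  have "addP c {} = Var" by (rule ext) (simp add: addP_def split: var.split)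
  then show ?case by (simp add: subst_Var_id)
next
  case (Cons x xs)
  have "fold (\<lambda>i. Phi (c i) (Var (X i))) (x # xs) f
     = subst (addP c (set xs)) (Phi (c x) (Var (X x)) f)" using Cons by simp
  also have "\<dots> = subst (addP c (set (x#xs))) f"
    unfolding Phi_def subst_subst
  proof (rule arg_cong[where f="\<lambda>\<sigma>. subst \<sigma> f"], rule ext)
    fix v show "subst (addP c (set xs)) (case v of P a k \<Rightarrow> if a = c x then Var (P a k) + Var (X x) ^ k else Var (P a k) | Z \<Rightarrow> Var v | X x \<Rightarrow> Var v)
      = addP c (set (x # xs)) v"
      using Cons.prems by (cases v) (auto simp: addP_def subst_add subst_pow)
  qed
  finally show ?case .
qed

lemma vac_fold: "distinct xs \<Longrightarrow>
  vac (fold (\<lambda>i. Phi (c i) (Var (X i))) xs f) = subst (evs c (set xs)) f"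
  unfolding fold_Phi vac_def subst_subst
  by (rule arg_cong[where f="\<lambda>\<sigma>. subst \<sigma> f"], rule ext)
     (auto simp: addP_def evs_def subst_add subst_sumX_id split: var.split)

lemma pibar_eq: "pibar N v c = subst (evs c {1..N}) v"
proof -
  have "set [1..<Suc N] = {1..N}" by auto
  then show ?thesis unfolding pibar_def by (subst vac_fold) auto
qed

lemma pibar_F_eq: "pibar_F N F c = subst (\<lambda>v. if v = Z then Var (X 1) else evs c {2..N} v) (F (c 1))"
proof -
  have e: "set [2..<Suc N] = {2..N}" by auto
  show ?thesis
  unfolding pibar_F_def vac_fold[OF distinct_upt] e subst_subst by (auto
     intro!: arg_cong[where f="\<lambda>\<sigma>. subst \<sigma> _"] ext simp: evs_def split: var.split)
qed

lemma coeff_main: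
  assumes "finite J" "\<And>k. \<rho> (P a k) = (\<Sum>j\<in>J. w j ^ k)"
  shows "subst \<rho> (\<Sum>k\<in>(\<lambda>m. Poly_Mapping.lookup m Z) ` Poly_Mapping.keys g. Var (P a k) * coeffZ k g)
     = (\<Sum>j\<in>J. subst (\<rho>(Z := w j)) g)"
proof -
  let ?K = "(\<lambda>m. Poly_Mapping.lookup m Z) ` Poly_Mapping.keys g"
  have cz: "subst \<rho> (coeffZ k g) = subst (\<rho>(Z := w j)) (coeffZ k g)" for k j
    by (rule subst_cong) (use Z_notin_coeffZ in auto)
  have "subst \<rho> (\<Sum>k\<in>?K. Var (P a k) * coeffZ k g) = (\<Sum>k\<in>?K. \<Sum>j\<in>J. w j ^ k * subst \<rho> (coeffZ k g))"
    by (simp add: subst_sum subst_mult assms(2) sum_distrib_right)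
  also have "\<dots> = (\<Sum>j\<in>J. \<Sum>k\<in>?K. subst (\<rho>(Z := w j)) (Var Z ^ k * coeffZ k g))"
    by (subst sum.swap) (simp add: subst_mult subst_pow cz[symmetric])
  also have "\<dots> = (\<Sum>j\<in>J. subst (\<rho>(Z := w j)) g)"
    by (subst (2) coeffZ_decomp) (simp add: subst_sum)
  finally show ?thesis .
qed

lemma group_sum:
  fixes T :: "'a \<Rightarrow> 'c \<Rightarrow> 'b::comm_monoid_add"
  assumes "finite A" "finite B" "c ` B \<subseteq> A"
  shows "(\<Sum>a\<in>A. \<Sum>j\<in>{j\<in>B. c j = a}. T a j) = (\<Sum>j\<in>B. T (c j) j)"
proof -
  have "(\<Sum>a\<in>A. \<Sum>j\<in>{j\<in>B. c j = a}. T a j) = (\<Sum>a\<in>A. \<Sum>j\<in>B. if c j = a then T a j else 0)"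
    using assms by (simp add: sum.inter_filter)
  also have "\<dots> = (\<Sum>j\<in>B. \<Sum>a\<in>A. if c j = a then T a j else 0)" by (rule sum.swap)
  also have "\<dots> = (\<Sum>j\<in>B. T (c j) j)"
    using assms by (intro sum.cong refl) (auto simp: sum.delta')
  finally show ?thesis .
qed

lemma swap_sum:
  fixes g :: "nat \<Rightarrow> 'b::ab_group_add"
  assumes "j \<in> {1..N}"
  shows "(\<Sum>i\<in>{2..N}. g (if i = 1 then j else if i = j then 1 else i)) = (\<Sum>i\<in>{1..N}. g i) - g j"
proof -
  let ?sw = "\<lambda>i::nat. if i = 1 then j else if i = j then 1 else i"
  have inj: "inj_on ?sw {2..N}" by (auto simp: inj_on_def split: if_splits)
  have img: "?sw ` {2..N} = {1..N} - {j}"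
  proof
    show "?sw ` {2..N} \<subseteq> {1..N} - {j}" using assms by auto
    show "{1..N} - {j} \<subseteq> ?sw ` {2..N}"
    proof
      fix x assume x: "x \<in> {1..N} - {j}"
      show "x \<in> ?sw ` {2..N}"
      proof (cases "x = 1")
        case True then show ?thesis using x assms by (intro image_eqI[of _ _ j]) auto
      next
        case False then show ?thesis using x assms by (intro image_eqI[of _ _ x]) auto
      qed
    qed
  qed
  have "(\<Sum>i\<in>{2..N}. g (?sw i)) = (\<Sum>i\<in>?sw ` {2..N}. g i)"
    using sum.reindex[OF inj, of g] by simp
  also have "\<dots> = (\<Sum>i\<in>{1..N}. g i) - g j"
    using img assms by (simp add: sum_diff1)
  finally show ?thesis .
qed

theorem lemma3p2:
  fixes s N :: nat and F :: "nat \<Rightarrow> pol" and c :: "nat \<Rightarrow> nat"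
  assumes "1 \<le> s" and "1 \<le> N"
    and "\<forall>a\<in>{1..s}. vars (F a) \<subseteq> {Z} \<union> {P b k | b k. b \<in> {1..s}}"
    and "\<forall>i\<in>{1..N}. c i \<in> {1..s}"
  shows "EN N (pibar_F N F) c = pibar N (S s F) c"
proof -
  define \<rho> where "\<rho> = evs c {1..N}"
  define sw where "sw = (\<lambda>j i::nat. if i = 1 then j else if i = j then 1 else i)"
  define g where "g = (\<lambda>b k i. if c i = b then Var (X i) ^ k else (0::pol))"
  have rhoP: "\<rho> (P b k) = (\<Sum>i\<in>{1..N}. g b k i)" for b k
    by (simp add: \<rho>_def evs_def g_def)
  have per_a: "subst \<rho> (let G = Phi_inv a (Var Z) (F a) in
       (\<Sum>k\<in>(\<lambda>m. Poly_Mapping.lookup m Z) ` Poly_Mapping.keys G. Var (P a k) * coeffZ k G))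
     = (\<Sum>j\<in>{j\<in>{1..N}. c j = a}. subst (\<rho>(Z := Var (X j))) (Phi_inv a (Var Z) (F a)))" for a
    unfolding Let_def
  proof (rule coeff_main)
    show "finite {j\<in>{1..N}. c j = a}" by simp
    fix k show "\<rho> (P a k) = (\<Sum>j\<in>{j\<in>{1..N}. c j = a}. Var (X j) ^ k)"
      unfolding \<rho>_def evs_def by (subst sum.inter_filter) auto
  qed
  have RHS: "pibar N (S s F) c = (\<Sum>j\<in>{1..N}. subst (\<rho>(Z := Var (X j))) (Phi_inv (c j) (Var Z) (F (c j))))"
    unfolding pibar_eq \<rho>_def[symmetric] S_def subst_sum per_a
    by (rule group_sum) (use assms(4) in auto)
  have LHS: "EN N (pibar_F N F) c = (\<Sum>j\<in>{1..N}. subst (\<lambda>v. swapX 1 j (if v = Z then Var (X 1) else evs (c(1 := c j, j := c 1)) {2..N} v)) (F (c j)))"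
    unfolding EN_def sigma_def pibar_F_eq swapX_def subst_subst
    by (intro sum.cong refl) (auto simp: subst_subst)
  show ?thesis
    unfolding LHS RHS
  proof (rule sum.cong[OF refl])
    fix j assume j: "j \<in> {1..N}"
    have vars: "vars (F (c j)) \<subseteq> {Z} \<union> {P b k | b k. b \<in> {1..s}}"
      using assms(3,4) j by blast
    show "subst (\<lambda>v. swapX 1 j (if v = Z then Var (X 1) else evs (c(1 := c j, j := c 1)) {2..N} v)) (F (c j))
       = subst (\<rho>(Z := Var (X j))) (Phi_inv (c j) (Var Z) (F (c j)))"
      unfolding Phi_inv_def subst_subst
    proof (rule subst_cong)
      fix v assume "v \<in> vars (F (c j))"
      with vars consider "v = Z" | b k where "v = P b k" by blast
      then show "swapX 1 j (if v = Z then Var (X 1) else evs (c(1 := c j, j := c 1)) {2..N} v) =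
        subst (\<rho>(Z := Var (X j))) (case v of P a k \<Rightarrow> if a = c j then Var (P a k) - Var Z ^ k else Var (P a k) | Z \<Rightarrow> Var v | X x \<Rightarrow> Var v)"
      proof cases
        case 1 then show ?thesis by (simp add: swapX_def)
      next
        case (2 b k)
        have c': "(c(1 := c j, j := c 1)) i = c (sw j i)" for i by (simp add: sw_def)
        have "swapX 1 j (evs (c(1 := c j, j := c 1)) {2..N} (P b k)) = (\<Sum>i\<in>{2..N}. g b k (sw j i))"
          unfolding evs_def swapX_def by (simp add: subst_sumX g_def sw_def cong: if_cong; intro sum.cong refl; auto)
        also have "\<dots> = (\<Sum>i\<in>{1..N}. g b k i) - g b k j"
          unfolding sw_def by (rule swap_sum[OF j])
        finally show ?thesis using 2 by (simp add: rhoP subst_diff subst_pow g_def)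
      qed
    qed
  qed
qed

end
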